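(* Let $0<r<1$ be fixed and let $T:\mathrm{Hol}(\mathbb{D})\to\mathrm{Hol}(\mathbb{D})$ be a linear continuous operator such that for all $f\in\mathrm{Hol}(\mathbb{D})$, \[ \|Tf\|_{\infty,r}=\|f\|_{\infty,r},\qquad\text{where } \|f\|_{\infty,r}=\sup_{|z|\le r}|f(z)|. \] Then there exist a map $B_1$, which is either constant or a finite Blaschke product, and $\beta\in\mathbb{C}$ with $|\beta|=1$, such that for all $f\in\mathrm{Hol}(\mathbb{D})$ and $z\in\mathbb{D}$, \[ (Tf)(z)=B_1(z/r)\,f(\beta z). \]
   Context: $\mathbb{D}$ is the open unit disc and $\mathrm{Hol}(\mathbb{D})$ the space of holomorphic functions on $\mathbb{D}$ with the topology of uniform convergence on compact subsets. A finite Blaschke product is a function of the form $z\mapsto c\prod_{j=1}^{n}\frac{z-a_j}{1-\overline{a_j}z}$ with $|c|=1$, $n\ge1$ and $a_1,\dots,a_n\in\mathbb{D}$. *)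

theory Defs
  imports "HOL-Analysis.Analysis"
begin

definition sup_norm_r :: "real \<Rightarrow> (complex \<Rightarrow> complex) \<Rightarrow> real" where
  "sup_norm_r r f = Sup {cmod (f z) | z. cmod z \<le> r}"

definition hol_conv :: "(nat \<Rightarrow> complex \<Rightarrow> complex) \<Rightarrow> (complex \<Rightarrow> complex) \<Rightarrow> bool" where
  "hol_conv F f \<longleftrightarrow>
     (\<forall>K. compact K \<and> K \<subseteq> ball 0 1 \<longrightarrow> uniform_limit K F f sequentially)"

text \<open>Linear continuous operator on Hol(D).  Functions are identified when they agree
  on the disc; Hol(D) is a Frechet (metrizable) space, so continuity is sequential continuity.\<close>
definition hol_operator :: "((complex \<Rightarrow> complex) \<Rightarrow> (complex \<Rightarrow> complex)) \<Rightarrow> bool" where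
  "hol_operator T \<longleftrightarrow>
     (\<forall>f. f holomorphic_on ball 0 1 \<longrightarrow> T f holomorphic_on ball 0 1) \<and>
     (\<forall>f g. f holomorphic_on ball 0 1 \<longrightarrow> g holomorphic_on ball 0 1 \<longrightarrow>
        (\<forall>z\<in>ball 0 1. T (\<lambda>w. f w + g w) z = T f z + T g z)) \<and>
     (\<forall>f c. f holomorphic_on ball 0 1 \<longrightarrow>
        (\<forall>z\<in>ball 0 1. T (\<lambda>w. c * f w) z = c * T f z)) \<and>
     (\<forall>F f. (\<forall>n. F n holomorphic_on ball 0 1) \<longrightarrow> f holomorphic_on ball 0 1 \<longrightarrow>
        hol_conv F f \<longrightarrow> hol_conv (\<lambda>n. T (F n)) (T f))"

definition finite_blaschke :: "(complex \<Rightarrow> complex) \<Rightarrow> bool" where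
  "finite_blaschke B \<longleftrightarrow>
     (\<exists>(c::complex) (n::nat) (a::nat \<Rightarrow> complex). cmod c = 1 \<and> n \<ge> 1 \<and> (\<forall>j<n. a j \<in> ball 0 1) \<and>
        (\<forall>z. B z = c * (\<Prod>j<n. (z - a j) / (1 - cnj (a j) * z))))"

end

theory Submission
  imports Defs "HOL-Complex_Analysis.Complex_Analysis"
begin
lemma sup_norm_set: "{cmod (f z) | z. cmod z \<le> r} = (\<lambda>z. cmod (f z)) ` cball 0 r"
  by (auto simp: mem_cball_0)

lemma sup_norm_ge:
  assumes "continuous_on (cball 0 r) f" "z \<in> cball 0 r"
  shows "cmod (f z) \<le> sup_norm_r r f"
proof -
  have "compact ((\<lambda>z. cmod (f z)) ` cball 0 r)"
    by (intro compact_continuous_image continuous_intros assms) auto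
  then have "bdd_above ((\<lambda>z. cmod (f z)) ` cball 0 r)"
    by (meson bounded_imp_bdd_above compact_imp_bounded)
  then show ?thesis unfolding sup_norm_r_def sup_norm_set
    using assms(2) by (intro cSup_upper) auto
qed

lemma sup_norm_eqI:
  assumes "y \<in> cball 0 r" "\<And>z. z \<in> cball 0 r \<Longrightarrow> cmod (f z) \<le> cmod (f y)"
  shows "sup_norm_r r f = cmod (f y)"
  unfolding sup_norm_r_def sup_norm_set
  by (rule cSup_eq_maximum) (use assms in auto)

lemma sup_norm_attained:
  assumes "continuous_on (cball 0 r) f" "0 \<le> r"
  shows "\<exists>y\<in>cball 0 r. sup_norm_r r f = cmod (f y) \<and> (\<forall>z\<in>cball 0 r. cmod (f z) \<le> cmod (f y))"
proof -
  have "compact ((\<lambda>z. cmod (f z)) ` cball 0 r)"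
    by (intro compact_continuous_image continuous_intros assms) auto
  moreover have "(\<lambda>z. cmod (f z)) ` cball 0 r \<noteq> {}" using assms(2) by auto
  ultimately obtain s where "s \<in> (\<lambda>z. cmod (f z)) ` cball 0 r" "\<forall>t\<in>(\<lambda>z. cmod (f z)) ` cball 0 r. t \<le> s"
    using compact_attains_sup by blast
  then obtain y where y: "y \<in> cball 0 r" "\<forall>z\<in>cball 0 r. cmod (f z) \<le> cmod (f y)" by auto
  then show ?thesis using sup_norm_eqI[of y r f] by auto
qed

lemma triangle_align:
  fixes a b c :: complex and s t :: real
  assumes "cmod a \<le> 1" "cmod b \<le> s" "cmod c \<le> t" "cmod (a + b + c) = 1 + s + t"
  shows "cmod a = 1 \<and> b = of_real s * a \<and> c = of_real t * a"
proof -
  have t1: "cmod (a + b + c) \<le> cmod (a + b) + cmod c" by (rule norm_triangle_ineq)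
  have t2: "cmod (a + b) \<le> cmod a + cmod b" by (rule norm_triangle_ineq)
  have e1: "cmod (a+b+c) = cmod (a+b) + cmod c" and e2: "cmod (a+b) = cmod a + cmod b"
    and na: "cmod a = 1" and nb: "cmod b = s" and nc: "cmod c = t"
    using t1 t2 assms by linarith+
  from e2 have "cmod a *\<^sub>R b = cmod b *\<^sub>R a" by (simp add: norm_triangle_eq)
  then have bb: "b = of_real s * a" using na nb by (simp add: scaleR_conv_of_real)
  from e1 have "cmod (a+b) *\<^sub>R c = cmod c *\<^sub>R (a+b)" by (simp add: norm_triangle_eq)
  then have "of_real (1 + s) * c = of_real t * ((1 + of_real s) * a)"
    using e2 na nb nc bb by (simp add: scaleR_conv_of_real algebra_simps)
  then have "of_real (1 + s) * c = of_real (1+s) * (of_real t * a)" by (simp add: algebra_simps)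
  moreover have "(1 + s) \<noteq> 0" using nb norm_ge_zero[of b] by linarith
  ultimately have "c = of_real t * a" by (simp del: of_real_add)
  then show ?thesis using na bb by simp
qed

locale iso_setup =
  fixes r :: real and T :: "(complex \<Rightarrow> complex) \<Rightarrow> complex \<Rightarrow> complex"
  assumes r0: "0 < r" and r1: "r < 1" and hT: "hol_operator T"
    and iso: "\<And>f. f holomorphic_on ball 0 1 \<Longrightarrow> sup_norm_r r (T f) = sup_norm_r r f"
begin

lemma T_hol: "f holomorphic_on ball 0 1 \<Longrightarrow> T f holomorphic_on ball 0 1"
  using hT unfolding hol_operator_def by blast

lemma T_add: "f holomorphic_on ball 0 1 \<Longrightarrow> g holomorphic_on ball 0 1 \<Longrightarrow> z \<in> ball 0 1 \<Longrightarrow>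
   T (\<lambda>w. f w + g w) z = T f z + T g z"
  using hT unfolding hol_operator_def by blast

lemma T_scale: "f holomorphic_on ball 0 1 \<Longrightarrow> z \<in> ball 0 1 \<Longrightarrow> T (\<lambda>w. c * f w) z = c * T f z"
  using hT unfolding hol_operator_def by blast

lemma T_cont: "(\<And>n. F n holomorphic_on ball 0 1) \<Longrightarrow> f holomorphic_on ball 0 1 \<Longrightarrow>
   hol_conv F f \<Longrightarrow> hol_conv (\<lambda>n. T (F n)) (T f)"
  using hT unfolding hol_operator_def by blast

lemma cball_sub: "cball 0 r \<subseteq> ball 0 1"
  using r1 by auto

definition g :: "nat \<Rightarrow> complex \<Rightarrow> complex" where "g k = T (\<lambda>w. w ^ k)"

lemma g_hol: "g k holomorphic_on ball 0 1"
  unfolding g_def by (intro T_hol holomorphic_intros)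

lemma g_cont: "continuous_on (cball 0 r) (g k)"
  by (meson cball_sub continuous_on_subset g_hol holomorphic_on_imp_continuous_on)

lemma T_zero: "z \<in> ball 0 1 \<Longrightarrow> T (\<lambda>w. 0) z = 0"
  using T_scale[of "\<lambda>w. 0" z 0] by simp

lemma T_poly: "z \<in> ball 0 1 \<Longrightarrow> T (\<lambda>w. \<Sum>k<N. c k * w ^ k) z = (\<Sum>k<N. c k * g k z)"
proof (induction N)
  case 0 then show ?case using T_zero by simp
next
  case (Suc N)
  have "T (\<lambda>w. \<Sum>k<Suc N. c k * w ^ k) z = T (\<lambda>w. (\<Sum>k<N. c k * w ^ k) + c N * w ^ N) z"
    by simp
  also have "\<dots> = T (\<lambda>w. \<Sum>k<N. c k * w ^ k) z + T (\<lambda>w. c N * w ^ N) z"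
    by (rule T_add) (use Suc.prems in \<open>auto intro!: holomorphic_intros\<close>)
  also have "T (\<lambda>w. c N * w ^ N) z = c N * g N z"
    unfolding g_def by (rule T_scale) (use Suc.prems in \<open>auto intro!: holomorphic_intros\<close>)
  finally show ?case using Suc by simp
qed

lemma sup_pow: "sup_norm_r r (\<lambda>w. w ^ k) = r ^ k"
proof -
  have "sup_norm_r r (\<lambda>w. w ^ k) = cmod ((of_real r :: complex) ^ k)"
    by (rule sup_norm_eqI) (use r0 in \<open>auto simp: norm_power intro!: power_mono\<close>)
  then show ?thesis using r0 by (simp add: norm_power)
qed

lemma g_norm: "sup_norm_r r (g k) = r ^ k"
  unfolding g_def by (subst iso) (auto intro!: holomorphic_intros simp: sup_pow)

lemma g_bound: "z \<in> cball 0 r \<Longrightarrow> cmod (g k z) \<le> r ^ k"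
  using sup_norm_ge[OF g_cont, of z k] g_norm by simp

lemma stepA:
  assumes mu: "cmod \<mu> = 1" and n: "n \<ge> 1"
  shows "\<exists>y\<in>cball 0 r. cmod (g 0 y) = 1 \<and> g 1 y * \<mu> = of_real r * g 0 y \<and>
             g n y * \<mu> ^ n = of_real r ^ n * g 0 y"
proof -
  define p where "p = (\<lambda>w::complex. (1 + \<mu> * w) + \<mu> ^ n * w ^ n)"
  have ph: "p holomorphic_on ball 0 1" unfolding p_def by (intro holomorphic_intros)
  have mc: "\<mu> * cnj \<mu> = 1" using mu by (metis complex_norm_square mult.commute norm_one of_real_1 power_one)
  have "sup_norm_r r p = cmod (p (of_real r * cnj \<mu>))"
  proof (rule sup_norm_eqI)
    show "of_real r * cnj \<mu> \<in> cball 0 r" using mu r0 by (simp add: norm_mult)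
    fix z :: complex assume z: "z \<in> cball 0 r"
    have "p (of_real r * cnj \<mu>) = of_real (1 + r + r ^ n)"
      proof -
      have "\<mu> * (of_real r * cnj \<mu>) = of_real r" using mc by (simp add: algebra_simps)
      then show ?thesis unfolding p_def by (simp only: power_mult_distrib[symmetric]) simp
    qed
    moreover have "cmod (p z) \<le> 1 + r + r ^ n"
    proof -
      have "cmod (p z) \<le> cmod (1 + \<mu>*z) + cmod (\<mu>^n * z^n)" unfolding p_def by (rule norm_triangle_ineq)
      moreover have "cmod (1 + \<mu>*z) \<le> 1 + cmod z" using norm_triangle_ineq[of 1 "\<mu>*z"] mu by (simp add: norm_mult)
      moreover have "cmod (\<mu>^n*z^n) = cmod z ^ n" using mu by (simp add: norm_mult norm_power)
      ultimately have "cmod (p z) \<le> 1 + cmod z + cmod z ^ n" by linarith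
      also have "\<dots> \<le> 1 + r + r ^ n" using z power_mono[of "cmod z" r n] by (auto simp: mem_cball_0)
      finally show ?thesis .
    qed
    moreover have "cmod (of_real (1 + r + r ^ n) :: complex) = 1 + r + r ^ n"
      using r0 by (simp only: norm_of_real) simp
    ultimately show "cmod (p z) \<le> cmod (p (of_real r * cnj \<mu>))" by simp
  qed
  also have "p (of_real r * cnj \<mu>) = of_real (1 + r + r ^ n)"
    proof -
      have "\<mu> * (of_real r * cnj \<mu>) = of_real r" using mc by (simp add: algebra_simps)
      then show ?thesis unfolding p_def by (simp only: power_mult_distrib[symmetric]) simp
    qed
  also have "cmod (of_real (1 + r + r ^ n) :: complex) = 1 + r + r ^ n"
      using r0 by (simp only: norm_of_real) simp
  finally have sp: "sup_norm_r r p = 1 + r + r ^ n" .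
  have Tp: "T p z = g 0 z + \<mu> * g 1 z + \<mu> ^ n * g n z" if "z \<in> ball 0 1" for z
  proof -
    have "T p z = T (\<lambda>w. 1 + \<mu> * w) z + T (\<lambda>w. \<mu> ^ n * w ^ n) z"
      unfolding p_def by (rule T_add) (use that in \<open>auto intro!: holomorphic_intros\<close>)
    also have "T (\<lambda>w. \<mu> ^ n * w ^ n) z = \<mu> ^ n * g n z"
      unfolding g_def by (rule T_scale) (use that in \<open>auto intro!: holomorphic_intros\<close>)
    also have "T (\<lambda>w. 1 + \<mu> * w) z = T (\<lambda>w. 1) z + T (\<lambda>w. \<mu> * w) z"
      by (rule T_add) (use that in \<open>auto intro!: holomorphic_intros\<close>)
    also have "T (\<lambda>w. \<mu> * w) z = \<mu> * g 1 z"
      unfolding g_def using T_scale[of "\<lambda>w. w" z \<mu>] that by simp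
    also have "T (\<lambda>w. 1) z = g 0 z" unfolding g_def by simp
    finally show ?thesis .
  qed
  have "continuous_on (cball 0 r) (T p)"
    by (meson T_hol cball_sub continuous_on_subset holomorphic_on_imp_continuous_on ph)
  then obtain y where y: "y \<in> cball 0 r" "sup_norm_r r (T p) = cmod (T p y)"
    using sup_norm_attained[of r "T p"] r0 by auto
  have "cmod (g 0 y + \<mu> * g 1 y + \<mu> ^ n * g n y) = 1 + r + r ^ n"
  proof -
    have "y \<in> ball 0 1" using y(1) cball_sub by blast
    then show ?thesis using y iso[OF ph] sp Tp[of y] by simp
  qed
  moreover have "cmod (g 0 y) \<le> 1" using g_bound[OF y(1), of 0] by simp
  moreover have "cmod (\<mu> * g 1 y) \<le> r" using g_bound[OF y(1), of 1] mu by (simp add: norm_mult)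
  moreover have "cmod (\<mu> ^ n * g n y) \<le> r ^ n" using g_bound[OF y(1), of n] mu by (simp add: norm_mult norm_power)
  ultimately have al: "cmod (g 0 y) = 1 \<and> \<mu> * g 1 y = of_real r * g 0 y \<and> \<mu> ^ n * g n y = of_real (r ^ n) * g 0 y"
    by (metis triangle_align)
  then show ?thesis using y(1) by (auto simp: mult.commute)
qed

end

lemma infinite_sphere_complex:
  assumes "0 < r" shows "infinite (sphere (0::complex) r)"
proof
  assume fin: "finite (sphere (0::complex) r)"
  have "{-r..r} \<subseteq> Re ` sphere 0 r"
  proof
    fix t assume t: "t \<in> {-r..r}"
    then have "t^2 \<le> r^2" using assms by (auto intro!: power2_le_iff_abs_le[THEN iffD2])
    then have "cmod (Complex t (sqrt (r^2 - t^2))) = r"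
      using assms by (simp add: cmod_def)
    then show "t \<in> Re ` sphere 0 r" by (intro image_eqI[of _ _ "Complex t (sqrt (r^2 - t^2))"]) auto
  qed
  moreover have "infinite {-r..r}" using assms by simp
  ultimately show False using fin by (meson finite_imageI finite_subset)
qed

lemma powser_hol_conv:
  fixes c :: "nat \<Rightarrow> complex"
  assumes "\<And>z. z \<in> ball 0 1 \<Longrightarrow> (\<lambda>k. c k * z ^ k) sums f z"
  shows "hol_conv (\<lambda>N w. \<Sum>k<N. c k * w ^ k) f"
  unfolding hol_conv_def
proof (intro allI impI)
  fix K :: "complex set" assume K: "compact K \<and> K \<subseteq> ball 0 1"
  obtain \<rho> where \<rho>: "0 \<le> \<rho>" "\<rho> < 1" "K \<subseteq> cball 0 \<rho>"
  proof (cases "K = {}")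
    case True then show ?thesis using that[of 0] by auto
  next
    case False
    have "compact (norm ` K)" using K by (intro compact_continuous_image continuous_intros) auto
    then obtain s where "s \<in> norm ` K" "\<forall>t\<in>norm ` K. t \<le> s"
      using compact_attains_sup False by (metis image_is_empty)
    then show ?thesis using that[of s] K by (force simp: mem_cball_0 subset_iff)
  qed
  define \<rho>' where "\<rho>' = (1 + \<rho>) / 2"
  have nr: "norm (of_real \<rho>' :: complex) = \<rho>'" by (simp only: norm_of_real) (use \<rho> in \<open>simp add: \<rho>'_def\<close>)
  have "(of_real \<rho>' :: complex) \<in> ball 0 1" using \<rho> nr by (simp add: \<rho>'_def)
  then have "summable (\<lambda>k. c k * (of_real \<rho>')^k)" using assms sums_summable by blast
  then have "ereal (norm (of_real \<rho>' :: complex)) \<le> conv_radius c" by (rule conv_radius_geI)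
  moreover note nr
  ultimately have le: "ereal \<rho>' \<le> conv_radius c" by simp
  have "ereal \<rho> < ereal \<rho>'" using \<rho> by (simp add: \<rho>'_def)
  then have "ereal \<rho> < conv_radius c" using le by (rule less_le_trans)
  from powser_uniform_limit[OF this, of 0]
  have ul: "uniform_limit (cball 0 \<rho>) (\<lambda>n x. \<Sum>i<n. c i * (x - 0) ^ i) (\<lambda>x. suminf (\<lambda>i. c i * (x - 0) ^ i)) sequentially" .
  have "uniform_limit (cball 0 \<rho>) (\<lambda>N w. \<Sum>k<N. c k * w ^ k) f sequentially"
  proof (rule uniform_limit_cong'[THEN iffD1, OF _ _ ul])
    fix x :: complex assume x: "x \<in> cball 0 \<rho>"
    then have "x \<in> ball 0 1" using \<rho> by auto
    then show "suminf (\<lambda>i. c i * (x - 0) ^ i) = f x" using assms sums_unique by fastforce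
  qed simp
  then show "uniform_limit K (\<lambda>N w. \<Sum>k<N. c k * w ^ k) f sequentially"
    by (rule uniform_limit_on_subset) (use \<rho> in auto)
qed

context iso_setup
begin

lemma series_T:
  assumes "f holomorphic_on ball 0 1" "\<And>z. z \<in> ball 0 1 \<Longrightarrow> (\<lambda>k. c k * z ^ k) sums f z" "z \<in> ball 0 1"
  shows "(\<lambda>k. c k * g k z) sums T f z"
proof -
  have "hol_conv (\<lambda>N. T (\<lambda>w. \<Sum>k<N. c k * w ^ k)) (T f)"
  proof (rule T_cont)
    show "hol_conv (\<lambda>N w. \<Sum>k<N. c k * w ^ k) f" by (rule powser_hol_conv) (use assms(2) in blast)
  qed (use assms(1) in \<open>auto intro!: holomorphic_intros\<close>)
  then have "uniform_limit {z} (\<lambda>N. T (\<lambda>w. \<Sum>k<N. c k * w ^ k)) (T f) sequentially"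
  proof -
    have "compact {z} \<and> {z} \<subseteq> ball 0 1" using assms(3) by simp
    then show ?thesis using \<open>hol_conv _ _\<close> unfolding hol_conv_def by blast
  qed
  then have "(\<lambda>N. T (\<lambda>w. \<Sum>k<N. c k * w ^ k) z) \<longlonglongrightarrow> T f z"
    by (rule tendsto_uniform_limitI) auto
  then show ?thesis unfolding sums_def using T_poly[OF assms(3)] by simp
qed

lemma relation:
  assumes n: "n \<ge> 1" and z: "z \<in> ball 0 1"
  shows "g n z * g 0 z ^ (n - 1) = g 1 z ^ n"
proof -
  define Y where "Y = {y \<in> cball 0 r. g 0 y \<noteq> 0 \<and> g n y * g 0 y ^ (n - 1) = g 1 y ^ n}"
  have sph: "sphere 0 r \<subseteq> (\<lambda>y. g 1 y / g 0 y) ` Y"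
  proof
    fix w :: complex assume w: "w \<in> sphere 0 r"
    then have wn: "cmod w = r" by simp
    define \<mu> where "\<mu> = of_real r / w"
    have w0: "w \<noteq> 0" using wn r0 by auto
    have mu: "cmod \<mu> = 1" using wn r0 by (simp add: \<mu>_def norm_divide)
    from stepA[OF this n] obtain y where y: "y \<in> cball 0 r" "cmod (g 0 y) = 1"
      "g 1 y * \<mu> = of_real r * g 0 y" "g n y * \<mu> ^ n = of_real r ^ n * g 0 y" by blast
    have h0: "g 0 y \<noteq> 0" using y(2) by auto
    have rr: "(of_real r :: complex) \<noteq> 0" using r0 by simp
    have g1: "g 1 y = w * g 0 y" using y(3) w0 rr by (simp add: \<mu>_def field_simps)
    have gn: "g n y = w ^ n * g 0 y" using y(4) w0 rr by (simp add: \<mu>_def field_simps power_divide)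
    have pw: "g 0 y * g 0 y ^ (n - 1) = g 0 y ^ n" using n
      by (metis Suc_diff_1 less_le_trans power_Suc zero_less_one)
    have "g n y * g 0 y ^ (n - 1) = w ^ n * (g 0 y * g 0 y ^ (n - 1))" by (simp add: gn mult_ac)
    also have "\<dots> = (w * g 0 y) ^ n" using pw by (simp add: power_mult_distrib)
    also have "\<dots> = g 1 y ^ n" using g1 by simp
    finally have "g n y * g 0 y ^ (n - 1) = g 1 y ^ n" .
    then have "y \<in> Y" using y(1) h0 by (simp add: Y_def)
    moreover have "w = g 1 y / g 0 y" using g1 h0 by simp
    ultimately show "w \<in> (\<lambda>y. g 1 y / g 0 y) ` Y" by blast
  qed
  have "infinite Y"
    using sph infinite_sphere_complex[OF r0] by (meson finite_imageI finite_subset)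
  moreover have "Y \<subseteq> cball 0 r" by (auto simp: Y_def)
  ultimately obtain \<xi> where \<xi>: "\<xi> \<in> cball 0 r" "\<xi> islimpt Y"
    using Heine_Borel_imp_Bolzano_Weierstrass[of "cball 0 r" Y] by auto
  define F where "F = (\<lambda>z. g n z * g 0 z ^ (n - 1) - g 1 z ^ n)"
  have "F z = 0"
  proof (rule analytic_continuation[of F "ball 0 1" Y \<xi>])
    show "F holomorphic_on ball 0 1"
      unfolding F_def by (intro holomorphic_intros g_hol)
    show "Y \<subseteq> ball 0 1" using \<open>Y \<subseteq> cball 0 r\<close> cball_sub by blast
    show "\<xi> \<in> ball 0 1" using \<xi>(1) cball_sub by blast
  qed (use \<xi> z in \<open>auto simp: Y_def F_def\<close>)
  then show ?thesis by (simp add: F_def)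
qed

lemma gk_formula:
  assumes z: "z \<in> ball 0 1" and h0: "g 0 z \<noteq> 0"
  shows "g k z = g 0 z * (g 1 z / g 0 z) ^ k"
proof (cases "k = 0")
  case True then show ?thesis by simp
next
  case False
  then have rel: "g k z * g 0 z ^ (k - 1) = g 1 z ^ k" using relation[OF _ z, of k] by simp
  have pw: "g 0 z ^ k = g 0 z * g 0 z ^ (k - 1)" using False
    by (metis Suc_diff_1 not_gr_zero power_Suc)
  have "g 0 z * (g 1 z / g 0 z) ^ k = g 0 z * g 1 z ^ k / g 0 z ^ k" by (simp add: power_divide)
  also have "\<dots> = g k z" using h0 unfolding pw rel[symmetric] by (simp add: field_simps)
  finally show ?thesis by simp
qed

lemma stepC:
  assumes z: "z \<in> ball 0 1" and h0: "g 0 z \<noteq> 0"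
  shows "cmod (g 1 z) < cmod (g 0 z)"
proof (rule ccontr)
  assume "\<not> ?thesis"
  then have ge: "cmod (g 0 z) \<le> cmod (g 1 z)" by simp
  have "(\<lambda>k. 1 * g k z) sums T (\<lambda>w. 1 / (1 - w)) z"
  proof (rule series_T[OF _ _ z])
    show "(\<lambda>w. 1 / (1 - w)) holomorphic_on ball 0 1"
      by (intro holomorphic_intros) (auto simp: dist_norm)
    fix w :: complex assume "w \<in> ball 0 1"
    then show "(\<lambda>k. 1 * w ^ k) sums (1 / (1 - w))" using geometric_sums[of w] by simp
  qed
  then have "summable (\<lambda>k. 1 * g k z)" by (rule sums_summable)
  then have "summable (\<lambda>k. g k z)" by simp
  then have "(\<lambda>k. g k z) \<longlonglongrightarrow> 0" by (rule summable_LIMSEQ_zero)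
  then have "(\<lambda>k. cmod (g k z)) \<longlonglongrightarrow> 0" by (rule tendsto_norm_zero)
  moreover have "0 < cmod (g 0 z)" using h0 by simp
  ultimately have "eventually (\<lambda>k. cmod (g k z) < cmod (g 0 z)) sequentially"
    by (rule order_tendstoD(2))
  then obtain N where N: "\<And>k. k \<ge> N \<Longrightarrow> cmod (g k z) < cmod (g 0 z)"
    by (auto simp: eventually_sequentially)
  have "1 \<le> cmod (g 1 z) / cmod (g 0 z)" using ge h0 by (simp add: le_divide_eq)
  then have "1 \<le> cmod (g 1 z / g 0 z)" by (simp only: norm_divide)
  then have "1 \<le> cmod (g 1 z / g 0 z) ^ N" by (rule one_le_power)
  then have "cmod (g 0 z) * 1 \<le> cmod (g 0 z) * cmod (g 1 z / g 0 z) ^ N"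
    by (intro mult_left_mono) auto
  also have "\<dots> = cmod (g N z)" using gk_formula[OF z h0, of N] by (simp add: norm_mult norm_power)
  finally show False using N[of N] by simp
qed

end

context iso_setup
begin

definition psi0 :: "complex \<Rightarrow> complex" where "psi0 = (\<lambda>w. g 1 w / g 0 w)"
definition psi :: "complex \<Rightarrow> complex" where "psi = remove_sings psi0"

lemma psi0_bound:
  assumes "w \<in> ball 0 1" shows "cmod (psi0 w) < 1"
proof (cases "g 0 w = 0")
  case True then show ?thesis by (simp add: psi0_def)
next
  case False
  have "cmod (g 1 w) / cmod (g 0 w) < 1" using stepC[OF assms False] False by simp
  then show ?thesis by (simp add: psi0_def norm_divide)
qed

lemma g_analytic: "g k analytic_on ball 0 1"
  by (simp add: analytic_on_open g_hol)

lemma psi0_mero: "z \<in> ball 0 1 \<Longrightarrow> psi0 meromorphic_on {z}"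
proof -
  assume z: "z \<in> ball 0 1"
  have "psi0 meromorphic_on ball 0 1" unfolding psi0_def
    by (intro meromorphic_on_divide analytic_on_imp_meromorphic_on g_analytic)
  then show ?thesis by (rule meromorphic_on_subset) (use z in auto)
qed

lemma psi0_lim:
  assumes z: "z \<in> ball 0 1" shows "\<exists>c. (psi0 \<longlongrightarrow> c) (at z)"
proof -
  have "not_essential psi0 z" using psi0_mero[OF z] by (simp add: meromorphic_at_iff)
  then obtain c where c: "(psi0 \<longlongrightarrow> c) (at z) \<or> is_pole psi0 z" by (auto simp: not_essential_def)
  have "\<not> is_pole psi0 z"
  proof
    assume "is_pole psi0 z"
    then have "filterlim psi0 at_infinity (at z)" by (simp add: is_pole_def)
    then have e1: "eventually (\<lambda>w. 2 \<le> norm (psi0 w)) (at z)"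
      using filterlim_at_infinity[of 0 psi0 "at z"] by auto
    have e2: "eventually (\<lambda>w. w \<in> ball 0 1) (at z)"
      by (rule eventually_at_in_open') (use z in auto)
    have b: "\<And>w. w \<in> ball 0 1 \<Longrightarrow> norm (psi0 w) \<le> 1" using psi0_bound less_imp_le by blast
    have "eventually (\<lambda>w. False) (at z)"
      using e1 e2 by eventually_elim (use b in \<open>force\<close>)
    then show False by (simp add: eventually_False)
  qed
  then show ?thesis using c by blast
qed

lemma psi_analytic: "psi analytic_on ball 0 1"
proof (subst analytic_on_analytic_at, intro ballI)
  fix z :: complex assume z: "z \<in> ball 0 1"
  obtain c where c: "(psi0 \<longlongrightarrow> c) (at z)" using psi0_lim[OF z] by blast
  have "isolated_singularity_at psi0 z" using psi0_mero[OF z] by (simp add: meromorphic_at_iff)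
  then show "psi analytic_on {z}" unfolding psi_def using c by (rule remove_sings_analytic_at)
qed

lemma psi_hol: "psi holomorphic_on ball 0 1"
  using psi_analytic by (rule analytic_imp_holomorphic)

lemma psi_eq:
  assumes z: "z \<in> ball 0 1" and h0: "g 0 z \<noteq> 0" shows "psi z = psi0 z"
proof -
  have "psi0 analytic_on {z}" unfolding psi0_def
  proof (rule analytic_on_divide)
    show "g 1 analytic_on {z}" "g 0 analytic_on {z}"
      using z by (meson analytic_on_subset empty_subsetI g_analytic insert_subset)+
    show "\<And>w. w \<in> {z} \<Longrightarrow> g 0 w \<noteq> 0" using h0 by simp
  qed
  then show ?thesis unfolding psi_def by (rule remove_sings_at_analytic)
qed

lemma psi_le:
  assumes z: "z \<in> ball 0 1" shows "cmod (psi z) \<le> 1"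
proof -
  obtain c where c: "(psi0 \<longlongrightarrow> c) (at z)" using psi0_lim[OF z] by blast
  then have pc: "psi z = c" unfolding psi_def by (rule remove_sings_eqI)
  have e2: "eventually (\<lambda>w. w \<in> ball 0 1) (at z)"
    by (rule eventually_at_in_open') (use z in auto)
  have b: "\<And>w. w \<in> ball 0 1 \<Longrightarrow> norm (psi0 w) \<le> 1" using psi0_bound less_imp_le by blast
  have "eventually (\<lambda>w. norm (psi0 w) \<le> 1) (at z)"
    using e2 by (rule eventually_mono) (rule b)
  then have "norm c \<le> 1" by (intro Lim_norm_ubound[OF _ c]) simp_all
  then show ?thesis using pc by simp
qed

lemma exists_nonzero: "\<exists>y\<in>cball 0 r. cmod (g 0 y) = 1 \<and> g 1 y = of_real r * g 0 y"
  using stepA[of 1 1] by auto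

lemma psi_lt:
  assumes z: "z \<in> ball 0 1" shows "cmod (psi z) < 1"
proof (rule ccontr)
  assume "\<not> ?thesis"
  then have e: "cmod (psi z) = 1" using psi_le[OF z] by simp
  have "psi constant_on ball 0 1"
  proof (rule maximum_modulus_principle[of psi "ball 0 1" "ball 0 1" z])
    show "\<And>x. x \<in> ball 0 1 \<Longrightarrow> cmod (psi x) \<le> cmod (psi z)" using psi_le e by simp
  qed (use psi_hol z in simp_all)
  then obtain c where c: "\<And>x. x \<in> ball 0 1 \<Longrightarrow> psi x = c" by (auto simp: constant_on_def)
  obtain y where y: "y \<in> cball 0 r" "cmod (g 0 y) = 1" using exists_nonzero by blast
  have yb: "y \<in> ball 0 1" using y(1) cball_sub by blast
  have "g 0 y \<noteq> 0" using y(2) by (metis norm_zero zero_neq_one)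
  then have "psi y = psi0 y" using psi_eq[OF yb] by blast
  then have "cmod (psi0 y) = 1" using c[OF yb] c[OF z] e by simp
  then show False using psi0_bound[OF yb] by simp
qed

end

lemma peak_lemma:
  fixes u w :: complex and r :: real
  assumes r: "0 < r" and u: "cmod u \<le> r" and w: "cmod w = r"
    and e: "cmod (1 + cnj w * u / of_real (r^2)) = 2"
  shows "u = w"
proof -
  define v where "v = cnj w * u / of_real (r^2)"
  have "cmod v \<le> 1"
  proof -
    have "cmod v = r * cmod u / r^2" using w r by (simp add: v_def norm_mult norm_divide norm_power)
    also have "\<dots> \<le> r * r / r^2" using u r by (intro divide_right_mono mult_left_mono) auto
    also have "\<dots> = 1" using r by (simp add: power2_eq_square)
    finally show ?thesis .
  qed
  have e': "cmod (1 + v) = 2" using e by (simp add: v_def)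
  have "cmod (1 + v) \<le> cmod (1::complex) + cmod v" by (rule norm_triangle_ineq)
  then have nv: "cmod v = 1" and te: "cmod (1 + v) = cmod (1::complex) + cmod v"
    using e' \<open>cmod v \<le> 1\<close> by simp_all
  have "cmod (1::complex) *\<^sub>R v = cmod v *\<^sub>R 1" using norm_triangle_eq[of "1::complex" v] te by blast
  then have v1: "v = 1" using nv by simp
  have "cnj w * w = of_real (r^2)" using w complex_norm_square[of w] by (simp add: mult.commute)
  moreover have "cnj w * u = of_real (r^2)" using v1 r by (simp add: v_def field_simps)
  ultimately have "cnj w * u = cnj w * w" by simp
  moreover have "cnj w \<noteq> 0" using w r by auto
  ultimately show ?thesis by simp
qed

context iso_setup
begin

lemma psi_at:
  assumes "y \<in> cball 0 r" "cmod (g 0 y) = 1" "g 1 y * \<mu> = of_real r * g 0 y" "\<mu> \<noteq> 0"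
  shows "psi y = of_real r / \<mu>"
proof -
  have yb: "y \<in> ball 0 1" using assms(1) cball_sub by blast
  have h0: "g 0 y \<noteq> 0" using assms(2) by (metis norm_zero zero_neq_one)
  have "psi y = g 1 y / g 0 y" using psi_eq[OF yb h0] by (simp add: psi0_def)
  also have "g 1 y = of_real r * g 0 y / \<mu>" using assms(3,4) by (simp add: field_simps)
  finally show ?thesis using h0 by simp
qed

lemma psi_zero: "psi 0 = 0"
proof (rule ccontr)
  define a where "a = psi 0"
  assume "psi 0 \<noteq> 0"
  then have a0: "a \<noteq> 0" by (simp add: a_def)
  define s where "s = cmod a"
  have s0: "0 < s" using a0 by (simp add: s_def)
  have s1: "s < 1" using psi_lt[of 0] by (simp add: s_def a_def)
  define \<mu> where "\<mu> = - of_real s / a"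
  have mu: "cmod \<mu> = 1" using s0 by (simp add: \<mu>_def norm_divide s_def)
  then have mu0: "\<mu> \<noteq> 0" by auto
  from stepA[OF mu, of 1] obtain y where y: "y \<in> cball 0 r" "cmod (g 0 y) = 1"
    "g 1 y * \<mu> = of_real r * g 0 y" by auto
  have yb: "y \<in> ball 0 1" using y(1) cball_sub by blast
  define w where "w = psi y"
  have w: "w = - of_real r * a / of_real s"
    using psi_at[OF y mu0] a0 s0 by (simp add: w_def \<mu>_def field_simps)
  define F where "F = Moebius_function 0 a \<circ> psi"
  have a1: "cmod a < 1" using s1 by (simp add: s_def)
  have Fh: "F holomorphic_on ball 0 1" unfolding F_def
  proof (rule holomorphic_on_compose_gen[OF psi_hol Moebius_function_holomorphic[OF a1]])
    show "psi ` ball 0 1 \<subseteq> ball 0 1" using psi_lt by auto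
  qed
  have F0: "F 0 = 0" by (simp add: F_def a_def Moebius_function_eq_zero)
  have Flt: "cmod (F z) < 1" if "cmod z < 1" for z
    unfolding F_def o_def using a1 psi_lt[of z] that by (intro Moebius_function_norm_lt_1) auto
  have "cmod (F y) \<le> cmod y" by (rule Schwarz_Lemma(1)[OF Fh F0 Flt]) (use yb in auto)
  also have "\<dots> \<le> r" using y(1) by simp
  finally have Fy: "cmod (F y) \<le> r" .
  have e1: "w - a = - of_real ((r + s) / s) * a" using s0 by (simp add: w field_simps)
  have "cnj a * a = of_real (s^2)" using complex_norm_square[of a] by (simp add: s_def mult.commute)
  then have e2: "1 - cnj a * w = of_real (1 + r * s)"
    using s0 by (simp add: w field_simps power2_eq_square)
  have "F y = (w - a) / (1 - cnj a * w)" by (simp add: F_def w_def Moebius_function_simple)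
  also have "\<dots> = - of_real ((r + s) / s) * a / of_real (1 + r * s)" using e1 e2 by simp
  finally have "cmod (F y) = cmod (- of_real ((r + s) / s) * a / of_real (1 + r * s))" by simp
  also have "\<dots> = \<bar>(r + s) / s\<bar> * s / \<bar>1 + r * s\<bar>"
    by (simp only: norm_divide norm_mult norm_minus_cancel norm_of_real s_def)
  also have "\<dots> = (r + s) / s * s / (1 + r * s)" using s0 r0 by simp
  finally have "cmod (F y) = (r + s) / s * s / (1 + r * s)" .
  also have "\<dots> = (r + s) / (1 + r * s)" using s0 by simp
  finally have "(r + s) / (1 + r * s) \<le> r" using Fy by simp
  then have "r + s \<le> r * (1 + r * s)" using s0 r0
    by (simp add: divide_le_eq add_pos_pos)
  then have "s * (1 - r * r) \<le> 0" by (simp add: algebra_simps)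
  moreover have "r * r < 1 * 1" using r0 r1 by (intro mult_strict_mono) auto
  then have "0 < 1 - r * r" by simp
  ultimately show False using s0 by (simp add: mult_le_0_iff)
qed

lemma beta_exists: "\<exists>\<beta>. cmod \<beta> = 1 \<and> (\<forall>z. cmod z < 1 \<longrightarrow> psi z = \<beta> * z)"
proof -
  from stepA[of 1 1] obtain y where y: "y \<in> cball 0 r" "cmod (g 0 y) = 1"
    "g 1 y * 1 = of_real r * g 0 y" by auto
  have yb: "y \<in> ball 0 1" using y(1) cball_sub by blast
  have py: "psi y = of_real r" using psi_at[OF y] by simp
  have Flt: "cmod (psi z) < 1" if "cmod z < 1" for z using psi_lt[of z] that by simp
  have "cmod (psi y) \<le> cmod y" by (rule Schwarz_Lemma(1)[OF psi_hol psi_zero Flt]) (use yb in auto)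
  moreover have "cmod y \<le> r" using y(1) by simp
  moreover have "cmod (psi y) = r" using py r0 by simp
  ultimately have eq: "cmod (psi y) = cmod y" by simp
  have "y \<noteq> 0" using py psi_zero r0 by auto
  then show ?thesis
    using Schwarz_Lemma(3)[OF psi_hol psi_zero Flt, of y] eq yb by auto
qed

end

context iso_setup
begin

lemma gn_formula:
  obtains \<beta> where "cmod \<beta> = 1" "\<And>n z. z \<in> ball 0 1 \<Longrightarrow> g n z = g 0 z * (\<beta> * z) ^ n"
proof -
  obtain \<beta> where b: "cmod \<beta> = 1" "\<And>z. cmod z < 1 \<Longrightarrow> psi z = \<beta> * z"
    using beta_exists by blast
  define S where "S = ball 0 1 \<inter> g 0 -` (- {0})"
  have So: "open S" unfolding S_def
    by (rule continuous_open_preimage) (auto intro: holomorphic_on_imp_continuous_on g_hol)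
  obtain y where y: "y \<in> cball 0 r" "cmod (g 0 y) = 1" using exists_nonzero by blast
  have "y \<in> ball 0 1" using y(1) cball_sub by blast
  moreover have "g 0 y \<noteq> 0" using y(2) by (metis norm_zero zero_neq_one)
  ultimately have "y \<in> S" by (simp add: S_def)
  then have Sne: "S \<noteq> {}" by auto
  have Ssub: "S \<subseteq> ball 0 1" by (auto simp: S_def)
  have "g n z = g 0 z * (\<beta> * z) ^ n" if z: "z \<in> ball 0 1" for n z
  proof (rule analytic_continuation_open[OF So _ Sne _ Ssub, of "g n" "\<lambda>z. g 0 z * (\<beta> * z) ^ n"])
    show "g n holomorphic_on ball 0 1" by (rule g_hol)
    show "(\<lambda>z. g 0 z * (\<beta> * z) ^ n) holomorphic_on ball 0 1" by (intro holomorphic_intros g_hol)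
    fix x assume x: "x \<in> S"
    then have xb: "x \<in> ball 0 1" and h0: "g 0 x \<noteq> 0" by (auto simp: S_def)
    have "g n x = g 0 x * (g 1 x / g 0 x) ^ n" by (rule gk_formula[OF xb h0])
    also have "g 1 x / g 0 x = psi x" using psi_eq[OF xb h0] by (simp add: psi0_def)
    also have "psi x = \<beta> * x" using b(2) xb by simp
    finally show "g n x = g 0 x * (\<beta> * x) ^ n" .
  qed (use z in auto)
  then show ?thesis using that b(1) by blast
qed

lemma stepE:
  assumes b: "cmod \<beta> = 1" "\<And>n z. z \<in> ball 0 1 \<Longrightarrow> g n z = g 0 z * (\<beta> * z) ^ n"
    and f: "f holomorphic_on ball 0 1" and z: "z \<in> ball 0 1"
  shows "T f z = g 0 z * f (\<beta> * z)"
proof -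
  define c where "c = (\<lambda>k. (deriv ^^ k) f 0 / fact k)"
  have ps: "(\<lambda>k. c k * w ^ k) sums f w" if "w \<in> ball 0 1" for w
    using holomorphic_power_series[OF f that] by (simp add: c_def)
  have s1: "(\<lambda>k. c k * g k z) sums T f z" by (rule series_T[OF f ps z])
  have bz: "\<beta> * z \<in> ball 0 1" using z b(1) by (simp add: norm_mult)
  have "(\<lambda>k. g 0 z * (c k * (\<beta> * z) ^ k)) sums (g 0 z * f (\<beta> * z))"
    by (rule sums_mult[OF ps[OF bz]])
  moreover have "(\<lambda>k. g 0 z * (c k * (\<beta> * z) ^ k)) = (\<lambda>k. c k * g k z)"
  proof (rule ext)
    fix k
    show "g 0 z * (c k * (\<beta> * z) ^ k) = c k * g k z"
      by (subst (2) b(2)[OF z]) (simp add: mult_ac)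
  qed
  ultimately have "(\<lambda>k. c k * g k z) sums (g 0 z * f (\<beta> * z))" by simp
  from sums_unique2[OF s1 this] show ?thesis .
qed

lemma stepF:
  assumes b: "cmod \<beta> = 1" "\<And>n z. z \<in> ball 0 1 \<Longrightarrow> g n z = g 0 z * (\<beta> * z) ^ n"
    and y: "cmod y = r"
  shows "cmod (g 0 y) = 1"
proof -
  define w where "w = \<beta> * y"
  have wn: "cmod w = r" using b(1) y by (simp add: w_def norm_mult)
  define c where "c = (\<lambda>k::nat. if k = 0 then 1/2 else cnj w / (2 * of_real (r^2)))"
  define q where "q = (\<lambda>u::complex. \<Sum>k<2. c k * u ^ k)"
  have qf: "q u = (1 + cnj w * u / of_real (r^2)) / 2" for u
    by (simp add: q_def c_def numeral_2_eq_2 field_simps)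
  have qh: "q holomorphic_on ball 0 1" unfolding q_def by (intro holomorphic_intros)
  have Tq: "T q z = g 0 z * q (\<beta> * z)" if "z \<in> ball 0 1" for z
  proof -
    have "T q z = (\<Sum>k<2. c k * g k z)" unfolding q_def by (rule T_poly[OF that])
    also have "\<dots> = (\<Sum>k<2. c k * (g 0 z * (\<beta> * z) ^ k))"
      by (intro sum.cong refl) (subst b(2)[OF that], rule refl)
    also have "\<dots> = g 0 z * q (\<beta> * z)" by (simp add: q_def sum_distrib_left mult_ac)
    finally show ?thesis .
  qed
  have r2: "(of_real (r^2) :: complex) \<noteq> 0" using r0 by simp
  have qle: "cmod (q u) \<le> 1" if "cmod u \<le> r" for u
  proof -
    have "cmod (cnj w * u / of_real (r^2)) = r * cmod u / r^2"
      using wn r0 by (simp add: norm_mult norm_divide norm_power)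
    also have "\<dots> \<le> r * r / r^2" using that r0 by (intro divide_right_mono mult_left_mono) auto
    also have "\<dots> = 1" using r0 by (simp add: power2_eq_square)
    finally have "cmod (cnj w * u / of_real (r^2)) \<le> 1" .
    then have "cmod (1 + cnj w * u / of_real (r^2)) \<le> 2"
      using norm_triangle_ineq[of 1 "cnj w * u / of_real (r^2)"] by simp
    then show ?thesis by (simp add: qf norm_divide)
  qed
  have qw: "q w = 1"
  proof -
    have "cnj w * w = of_real (r^2)" using wn complex_norm_square[of w] by (simp add: mult.commute)
    then show ?thesis using r2 by (simp add: qf)
  qed
  have "sup_norm_r r q = cmod (q w)"
    by (rule sup_norm_eqI) (use wn qle qw in auto)
  then have sq: "sup_norm_r r q = 1" using qw by simp
  have "continuous_on (cball 0 r) (T q)"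
    by (meson T_hol cball_sub continuous_on_subset holomorphic_on_imp_continuous_on qh)
  then obtain y' where y': "y' \<in> cball 0 r" "sup_norm_r r (T q) = cmod (T q y')"
    using sup_norm_attained[of r "T q"] r0 by auto
  have yb': "y' \<in> ball 0 1" using y'(1) cball_sub by blast
  have one: "cmod (g 0 y') * cmod (q (\<beta> * y')) = 1"
    using y'(2) iso[OF qh] sq Tq[OF yb'] by (simp add: norm_mult)
  have g1: "cmod (g 0 y') \<le> 1" using g_bound[OF y'(1), of 0] by simp
  have by': "cmod (\<beta> * y') \<le> r" using y'(1) b(1) by (simp add: norm_mult)
  have q1: "cmod (q (\<beta> * y')) \<le> 1" using qle[OF by'] .
  have "cmod (q (\<beta> * y')) = 1"
  proof (rule ccontr)
    assume "cmod (q (\<beta> * y')) \<noteq> 1"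
    then have "cmod (q (\<beta> * y')) < 1" using q1 by simp
    then have "cmod (g 0 y') * cmod (q (\<beta> * y')) < 1"
      using mult_left_le_one_le[of "cmod (q (\<beta> * y'))" "cmod (g 0 y')"] g1 by simp
    then show False using one by simp
  qed
  then have gy: "cmod (g 0 y') = 1" using one by simp
  have "cmod (1 + cnj w * (\<beta> * y') / of_real (r^2)) = 2"
    using \<open>cmod (q (\<beta> * y')) = 1\<close> by (simp add: qf norm_divide)
  then have "\<beta> * y' = w" using peak_lemma[OF r0 by' wn] by blast
  then have "y' = y" using b(1) by (auto simp: w_def)
  then show ?thesis using gy by simp
qed

end

lemma zeros_finite:
  fixes H :: "complex \<Rightarrow> complex"
  assumes R: "1 < R" and H: "H holomorphic_on ball 0 R" and u: "\<And>w. cmod w = 1 \<Longrightarrow> cmod (H w) = 1"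
  shows "finite {w \<in> ball 0 1. H w = 0}"
proof (rule ccontr)
  assume inf: "infinite {w \<in> ball 0 1. H w = 0}"
  have "{w \<in> ball 0 1. H w = 0} \<subseteq> cball 0 1" by auto
  then obtain \<xi> where \<xi>: "\<xi> \<in> cball 0 1" "\<xi> islimpt {w \<in> ball 0 1. H w = 0}"
    using Heine_Borel_imp_Bolzano_Weierstrass[OF compact_cball inf] by blast
  have "H 1 = 0"
  proof (rule analytic_continuation[OF H _ _ _ _ \<xi>(2)])
    show "{w \<in> ball 0 1. H w = 0} \<subseteq> ball 0 R" using R by auto
    show "\<xi> \<in> ball 0 R" using \<xi>(1) R by auto
    show "(1::complex) \<in> ball 0 R" using R by auto
  qed auto
  then show False using u[of 1] by simp
qed

lemma prod_extend:
  "(\<Prod>j<n+m. f (if j < n then a j else b)) = (\<Prod>j<n. f (a j)) * f b ^ m"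
proof (induction m)
  case 0
  then show ?case by (auto intro!: prod.cong)
next
  case (Suc m)
  then show ?case by (simp add: prod.lessThan_Suc mult_ac)
qed

lemma blaschke_ind:
  fixes H :: "complex \<Rightarrow> complex"
  assumes "1 < R" "H holomorphic_on ball 0 R" "\<And>w. cmod w = 1 \<Longrightarrow> cmod (H w) = 1"
    "card {w \<in> ball 0 1. H w = 0} = k"
  shows "\<exists>c (n::nat) a. cmod c = 1 \<and> (\<forall>j<n. a j \<in> ball 0 1) \<and>
           (\<forall>w\<in>ball 0 1. H w = c * (\<Prod>j<n. (w - a j) / (1 - cnj (a j) * w)))"
  using assms
proof (induction k arbitrary: H)
  case 0
  have R: "1 < R" and Hh: "H holomorphic_on ball 0 R" and u: "\<And>w. cmod w = 1 \<Longrightarrow> cmod (H w) = 1"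
    using 0 by auto
  have fin: "finite {w \<in> ball 0 1. H w = 0}" by (rule zeros_finite[OF R Hh u])
  then have "{w \<in> ball 0 1. H w = 0} = {}" using 0(4) by simp
  then have nz: "H w \<noteq> 0" if "w \<in> cball 0 1" for w
    using that u[of w] by (cases "cmod w = 1") (auto simp: mem_cball_0 )
  have sub: "cball 0 1 \<subseteq> ball (0::complex) R" using R by auto
  have Hc: "continuous_on (cball 0 1) H"
    by (meson Hh sub continuous_on_subset holomorphic_on_imp_continuous_on)
  have Hb: "H holomorphic_on ball 0 1" by (rule holomorphic_on_subset[OF Hh]) (use sub in auto)
  have le1: "cmod (H w) \<le> 1" if "w \<in> ball 0 1" for w
  proof (rule maximum_modulus_frontier[of H "ball 0 1"])
    show "H holomorphic_on interior (ball 0 1)" using Hb by simp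
    show "continuous_on (closure (ball 0 1)) H" using Hc by simp
    show "\<And>z. z \<in> frontier (ball 0 1) \<Longrightarrow> cmod (H z) \<le> 1" using u by simp
  qed (use that in auto)
  have ge1: "cmod (inverse (H w)) \<le> 1" if "w \<in> ball 0 1" for w
  proof (rule maximum_modulus_frontier[of "\<lambda>w. inverse (H w)" "ball 0 1"])
    show "(\<lambda>w. inverse (H w)) holomorphic_on interior (ball 0 1)"
      using Hb nz by (auto intro!: holomorphic_intros)
    show "continuous_on (closure (ball 0 1)) (\<lambda>w. inverse (H w))"
      using Hc nz by (auto intro!: continuous_intros)
    show "\<And>z. z \<in> frontier (ball 0 1) \<Longrightarrow> cmod (inverse (H z)) \<le> 1" using u by (simp add: norm_inverse)
  qed (use that in auto)
  have eq1: "cmod (H w) = 1" if "w \<in> ball 0 1" for w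
  proof -
    have "H w \<noteq> 0" using nz that by auto
    then show ?thesis using le1[OF that] ge1[OF that]
      by (auto simp: norm_inverse inverse_le_1_iff)
  qed
  have "H constant_on ball 0 1"
    by (rule maximum_modulus_principle[of H "ball 0 1" "ball 0 1" 0]) (use Hb eq1 in auto)
  then obtain c where c: "\<And>w. w \<in> ball 0 1 \<Longrightarrow> H w = c" by (auto simp: constant_on_def)
  have "cmod c = 1" using c[of 0] eq1[of 0] by simp
  then have "\<exists>a. cmod c = 1 \<and> (\<forall>j<(0::nat). a j \<in> ball 0 1) \<and>
     (\<forall>w\<in>ball 0 1. H w = c * (\<Prod>j<(0::nat). (w - a j) / (1 - cnj (a j) * w)))"
    using c by simp
  then have "\<exists>n a. cmod c = 1 \<and> (\<forall>j<(n::nat). a j \<in> ball 0 1) \<and>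
     (\<forall>w\<in>ball 0 1. H w = c * (\<Prod>j<n. (w - a j) / (1 - cnj (a j) * w)))"
    by (rule exI)
  then show ?case by (rule exI)
next
  case (Suc k)
  have R: "1 < R" and Hh: "H holomorphic_on ball 0 R" and u: "\<And>w. cmod w = 1 \<Longrightarrow> cmod (H w) = 1"
    using Suc.prems by auto
  define Z where "Z = {w \<in> ball 0 1. H w = 0}"
  have fin: "finite Z" unfolding Z_def by (rule zeros_finite[OF R Hh u])
  have cZ: "card Z = Suc k" using Suc.prems(4) by (simp add: Z_def)
  then have "Z \<noteq> {}" by auto
  then obtain \<xi> where \<xi>Z: "\<xi> \<in> Z" by blast
  then have \<xi>b: "\<xi> \<in> ball 0 1" and H\<xi>: "H \<xi> = 0" by (auto simp: Z_def)
  have \<xi>R: "\<xi> \<in> ball 0 R" using \<xi>b R by auto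
  have nc: "\<not> H constant_on ball 0 R"
  proof
    assume "H constant_on ball 0 R"
    then obtain c where "\<And>x. x \<in> ball 0 R \<Longrightarrow> H x = c" by (auto simp: constant_on_def)
    then have "H 1 = H \<xi>" using \<xi>R R by auto
    then show False using H\<xi> u[of 1] by simp
  qed
  obtain m \<rho> gg where gg: "0 < m" "0 < \<rho>" "ball \<xi> \<rho> \<subseteq> ball 0 R" "gg holomorphic_on ball \<xi> \<rho>"
      "\<And>w. w \<in> ball \<xi> \<rho> \<Longrightarrow> H w = (w - \<xi>) ^ m * gg w"
      "\<And>w. w \<in> ball \<xi> \<rho> \<Longrightarrow> gg w \<noteq> 0"
    by (rule holomorphic_factor_zero_nonconstant[OF Hh open_ball connected_ball \<xi>R H\<xi> nc]) (rule that)
  define F where "F = (\<lambda>y. if y = \<xi> then gg \<xi> else H y / (y - \<xi>) ^ m)"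
  have Fh: "F holomorphic_on ball 0 R" unfolding F_def
  proof (rule removable_singularity)
    show "(\<lambda>y. H y / (y - \<xi>) ^ m) holomorphic_on ball 0 R - {\<xi>}"
      by (intro holomorphic_intros holomorphic_on_subset[OF Hh]) auto
    have "isCont gg \<xi>"
    proof -
      have "continuous_on (ball \<xi> \<rho>) gg" using gg(4) by (rule holomorphic_on_imp_continuous_on)
      then show ?thesis using gg(2) continuous_on_eq_continuous_at[of "ball \<xi> \<rho>" gg] by simp
    qed
    then have lim: "gg \<midarrow>\<xi>\<rightarrow> gg \<xi>" by (simp add: isCont_def)
    have "eventually (\<lambda>y. y \<in> ball \<xi> \<rho> - {\<xi>}) (at \<xi>)"
      by (rule eventually_at_in_open) (use gg(2) in auto)
    then have "eventually (\<lambda>y. gg y = H y / (y - \<xi>) ^ m) (at \<xi>)"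
      by (rule eventually_mono) (use gg(5) in auto)
    then show "(\<lambda>y. H y / (y - \<xi>) ^ m) \<midarrow>\<xi>\<rightarrow> gg \<xi>"
      using lim by (rule Lim_transform_eventually[rotated])
  qed simp
  define H1 where "H1 = (\<lambda>w. F w * (1 - cnj \<xi> * w) ^ m)"
  have H1h: "H1 holomorphic_on ball 0 R" unfolding H1_def by (intro holomorphic_intros Fh)
  have den: "1 - cnj \<xi> * w \<noteq> 0" if "cmod w \<le> 1" for w
  proof -
    have "cmod (cnj \<xi> * w) = cmod \<xi> * cmod w" by (simp add: norm_mult)
    also have "\<dots> \<le> cmod \<xi>" using that mult_left_le[of "cmod w" "cmod \<xi>"] by simp
    also have "\<dots> < 1" using \<xi>b by simp
    finally have "cmod (cnj \<xi> * w) < 1" .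
    then show ?thesis by auto
  qed
  have Hrep: "H w = ((w - \<xi>) / (1 - cnj \<xi> * w)) ^ m * H1 w" if "w \<in> ball 0 1" for w
  proof (cases "w = \<xi>")
    case True then show ?thesis using H\<xi> gg(1) by simp
  next
    case False
    have d: "1 - cnj \<xi> * w \<noteq> 0" using den[of w] that by simp
    then show ?thesis using False by (simp add: H1_def F_def power_divide)
  qed
  have H1u: "cmod (H1 w) = 1" if w: "cmod w = 1" for w
  proof -
    have wx: "w \<noteq> \<xi>" using w \<xi>b by auto
    have "w * cnj w = 1" using complex_norm_square[of w] w by simp
    then have "cnj w * (1 - cnj \<xi> * w) = cnj (w - \<xi>)" by (simp add: algebra_simps)
    then have "cmod (1 - cnj \<xi> * w) = cmod (w - \<xi>)"
      using w by (metis complex_mod_cnj mult_1 norm_mult)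
    then show ?thesis using u[OF w] wx
      by (simp add: H1_def F_def norm_mult norm_divide norm_power)
  qed
  have Z1: "{w \<in> ball 0 1. H1 w = 0} = Z - {\<xi>}"
  proof -
    have "H1 w = 0 \<longleftrightarrow> w \<noteq> \<xi> \<and> H w = 0" if "w \<in> ball 0 1" for w
    proof -
      have d: "1 - cnj \<xi> * w \<noteq> 0" using den[of w] that by simp
      have "gg \<xi> \<noteq> 0" using gg(2,6) by simp
      then show ?thesis using d by (auto simp: H1_def F_def)
    qed
    then show ?thesis by (auto simp: Z_def)
  qed
  have ck: "card {w \<in> ball 0 1. H1 w = 0} = k" using Z1 cZ fin \<xi>Z by simp
  have "\<exists>c (n::nat) a. cmod c = 1 \<and> (\<forall>j<n. a j \<in> ball 0 1) \<and>
           (\<forall>w\<in>ball 0 1. H1 w = c * (\<Prod>j<n. (w - a j) / (1 - cnj (a j) * w)))"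
    by (rule Suc.IH[of H1]) (use R H1h H1u ck in auto)
  then obtain c and n :: nat and a where ca: "cmod c = 1" "\<forall>j<n. a j \<in> ball 0 1"
    "\<forall>w\<in>ball 0 1. H1 w = c * (\<Prod>j<n. (w - a j) / (1 - cnj (a j) * w))" by blast
  define a' where "a' = (\<lambda>j. if j < n then a j else \<xi>)"
  have "\<forall>j<n+m. a' j \<in> ball 0 1" using ca(2) \<xi>b by (auto simp: a'_def)
  moreover have "H w = c * (\<Prod>j<n+m. (w - a' j) / (1 - cnj (a' j) * w))" if "w \<in> ball 0 1" for w
  proof -
    have "(\<Prod>j<n+m. (w - a' j) / (1 - cnj (a' j) * w)) =
          (\<Prod>j<n. (w - a j) / (1 - cnj (a j) * w)) * ((w - \<xi>) / (1 - cnj \<xi> * w)) ^ m"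
      unfolding a'_def using prod_extend[where f="\<lambda>b. (w - b) / (1 - cnj b * w)" and n=n and m=m and a=a and b=\<xi>] by simp
    then show ?thesis using Hrep[OF that] ca(3) that by (simp add: mult_ac)
  qed
  ultimately show ?case using ca(1) by blast
qed

lemma blaschke_extend:
  fixes H :: "complex \<Rightarrow> complex" and R :: real and n :: nat
  assumes R: "1 < R" and Hh: "H holomorphic_on ball 0 R" and c: "cmod c = 1"
    and a: "\<forall>j<n. a j \<in> ball 0 1"
    and eq: "\<forall>w\<in>ball 0 1. H w = c * (\<Prod>j<n. (w - a j) / (1 - cnj (a j) * w))"
    and w: "w \<in> ball 0 R"
  shows "H w = c * (\<Prod>j<n. (w - a j) / (1 - cnj (a j) * w))"
proof -
  define P where "P = (\<lambda>w. \<Prod>j<n. (w - a j))"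
  define Q where "Q = (\<lambda>w. \<Prod>j<n. (1 - cnj (a j) * w))"
  have quot: "(\<Prod>j<n. (w - a j) / (1 - cnj (a j) * w)) = P w / Q w" for w
    by (simp add: P_def Q_def prod_dividef)
  have Qnz: "Q w \<noteq> 0" if "cmod w \<le> 1" for w
  proof -
    have "1 - cnj (a j) * w \<noteq> 0" if j: "j < n" for j
    proof -
      have "cmod (cnj (a j) * w) = cmod (a j) * cmod w" by (simp add: norm_mult)
      also have "\<dots> \<le> cmod (a j)" using \<open>cmod w \<le> 1\<close> mult_left_le[of "cmod w" "cmod (a j)"] by simp
      also have "\<dots> < 1" using a j by simp
      finally show ?thesis by auto
    qed
    then show ?thesis by (simp add: Q_def)
  qed
  have "H w * Q w = c * P w"
  proof (rule analytic_continuation_open[of "ball 0 1" "ball 0 R" "\<lambda>w. H w * Q w" "\<lambda>w. c * P w"])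
    show "ball (0::complex) 1 \<subseteq> ball 0 R" using R by auto
    show "(\<lambda>w. H w * Q w) holomorphic_on ball 0 R" unfolding Q_def by (intro holomorphic_intros Hh)
    show "(\<lambda>w. c * P w) holomorphic_on ball 0 R" unfolding P_def by (intro holomorphic_intros)
    fix z :: complex assume z: "z \<in> ball 0 1"
    have "Q z \<noteq> 0" using Qnz[of z] z by simp
    then show "H z * Q z = c * P z" using eq z quot[of z] by simp
  qed (use w in auto)
  moreover have "Q w \<noteq> 0"
  proof
    assume Q0: "Q w = 0"
    then obtain j where j: "j < n" "1 - cnj (a j) * w = 0" by (auto simp: Q_def)
    then have "cnj (a j) * w = 1" by simp
    then have "cmod (a j) * cmod w = 1" by (metis complex_mod_cnj norm_mult norm_one)
    moreover have "cmod (a j) < 1" using a j by simp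
    ultimately have w1: "1 < cmod w"
    proof -
      assume p: "cmod (a j) * cmod w = 1" "cmod (a j) < 1"
      show ?thesis
      proof (rule ccontr)
        assume "\<not> 1 < cmod w"
        then have "cmod (a j) * cmod w \<le> cmod (a j)" using mult_left_le[of "cmod w" "cmod (a j)"] by simp
        then show False using p by simp
      qed
    qed
    have "P w \<noteq> 0"
    proof -
      have "w - a k \<noteq> 0" if "k < n" for k
      proof -
        have "cmod (a k) < 1" using a that by simp
        then show ?thesis using w1 by auto
      qed
      then show ?thesis by (simp add: P_def)
    qed
    moreover have "c \<noteq> 0" using c by auto
    ultimately show False using \<open>H w * Q w = c * P w\<close> Q0 by simp
  qed
  ultimately have "H w = c * (P w / Q w)" by (simp add: field_simps)
  then show ?thesis by (simp only: quot)
qed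

theorem theorem4p2:
  fixes r :: real and T :: "(complex \<Rightarrow> complex) \<Rightarrow> (complex \<Rightarrow> complex)"
  assumes "0 < r" "r < 1"
    and "hol_operator T"
    and "\<And>f. f holomorphic_on ball 0 1 \<Longrightarrow> sup_norm_r r (T f) = sup_norm_r r f"
  shows "\<exists>B1 \<beta>. ((\<exists>c. \<forall>z. B1 z = c) \<or> finite_blaschke B1) \<and> cmod \<beta> = 1 \<and>
           (\<forall>f. f holomorphic_on ball 0 1 \<longrightarrow>
              (\<forall>z\<in>ball 0 1. T f z = B1 (z / of_real r) * f (\<beta> * z)))"
proof -
  interpret iso_setup r T using assms by unfold_locales auto
  obtain \<beta> where b: "cmod \<beta> = 1" "\<And>n z. z \<in> ball 0 1 \<Longrightarrow> g n z = g 0 z * (\<beta> * z) ^ n"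
    using gn_formula by blast
  define H where "H = (\<lambda>w. g 0 (of_real r * w))"
  have R: "1 < 1 / r" using r0 r1 by simp
  have Hh: "H holomorphic_on ball 0 (1 / r)"
  proof -
    have "(g 0 \<circ> (\<lambda>w. of_real r * w)) holomorphic_on ball 0 (1 / r)"
    proof (rule holomorphic_on_compose_gen[OF _ g_hol])
      show "(\<lambda>w. of_real r * w) holomorphic_on ball 0 (1 / r)" by (intro holomorphic_intros)
      have sub: "cmod (of_real r * w) < 1" if w: "cmod w < 1 / r" for w :: complex
      proof -
        have "cmod (of_real r * w) = r * cmod w" using r0 by (simp add: norm_mult)
        also have "\<dots> < r * (1 / r)" using w r0 by (intro mult_strict_left_mono) auto
        also have "\<dots> = 1" using r0 by simp
        finally show ?thesis .
      qed
      show "(\<lambda>w::complex. of_real r * w) ` ball 0 (1 / r) \<subseteq> ball 0 1" using sub by auto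
    qed
    then show ?thesis by (simp add: H_def o_def)
  qed
  have Hu: "cmod (H w) = 1" if "cmod w = 1" for w
  proof -
    have "cmod (of_real r * w) = r" using that r0 by (simp add: norm_mult)
    from stepF[OF b this] show ?thesis unfolding H_def .
  qed
  obtain c and n :: nat and a where ca: "cmod c = 1" "\<forall>j<n. a j \<in> ball 0 1"
      "\<forall>w\<in>ball 0 1. H w = c * (\<Prod>j<n. (w - a j) / (1 - cnj (a j) * w))"
    using blaschke_ind[OF R Hh Hu refl] by blast
  define B1 where "B1 = (\<lambda>z. c * (\<Prod>j<n. (z - a j) / (1 - cnj (a j) * z)))"
  have HB: "H w = B1 w" if "w \<in> ball 0 (1 / r)" for w
    unfolding B1_def by (rule blaschke_extend[OF R Hh ca that])
  have main: "T f z = B1 (z / of_real r) * f (\<beta> * z)" if f: "f holomorphic_on ball 0 1" and z: "z \<in> ball 0 1" for f z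
  proof -
    have "T f z = g 0 z * f (\<beta> * z)" by (rule stepE[OF b f z])
    moreover have "g 0 z = H (z / of_real r)" using r0 by (simp add: H_def)
    moreover have "z / of_real r \<in> ball 0 (1 / r)"
      using z r0 by (simp add: norm_divide divide_strict_right_mono)
    ultimately show ?thesis using HB by simp
  qed
  have "(\<exists>c. \<forall>z. B1 z = c) \<or> finite_blaschke B1"
  proof (cases "n = 0")
    case True then show ?thesis by (simp add: B1_def)
  next
    case False
    then have "finite_blaschke B1" unfolding finite_blaschke_def B1_def
      using ca(1,2) by (intro exI[of _ c] exI[of _ n] exI[of _ a]) auto
    then show ?thesis by blast
  qed
  then show ?thesis using b(1) main by blast
qed

end
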